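(* Let $r>0$, $0<p<1$ and $q=1-p$. Let $N$ be a negative binomial random variable with $P(N=n)=\binom{r+n-1}{n}p^r q^n$, $n=0,1,2,\dots$, and conditionally on $N=n$ let $X$ be uniformly distributed on $\{0,1,\dots,n\}$, i.e. $P(X=x\mid N=n)=\frac{1}{n+1}$ for $x\in\{0,\dots,n\}$. Then for every $x=0,1,2,\dots$, $$P(X=x)=\frac{q^{x}p^{r}}{1+x}\binom{r+x-1}{x}\,{}_2F_1(1,r+x;2+x;q).$$
   Context: For real $r>0$, $\binom{r+n-1}{n}=\frac{\Gamma(r+n)}{n!\,\Gamma(r)}$. The Gauss hypergeometric function is ${}_2F_1(a,b;c;z)=\sum_{n=0}^\infty \frac{(a)_n(b)_n}{(c)_n}\frac{z^n}{n!}$ for $|z|<1$, where $(s)_0=1$ and $(s)_n=s(s+1)\cdots(s+n-1)$ for $n\ge1$. The distribution of $X$ is called the Uniform-negative binomial distribution $\mathcal{UNB}(r,p)$. *)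

theory Defs
  imports "HOL-Probability.Probability"
begin

text \<open>Generalised binomial coefficient binom(r+n-1, n) for real r > 0, via the Gamma function.\<close>
definition nb_binom :: "real \<Rightarrow> nat \<Rightarrow> real" where
  "nb_binom r n = Gamma (r + real n) / (fact n * Gamma r)"

definition hyp2F1 :: "real \<Rightarrow> real \<Rightarrow> real \<Rightarrow> real \<Rightarrow> real" where
  "hyp2F1 a b c z =
     (\<Sum>n. pochhammer a n * pochhammer b n / pochhammer c n * z ^ n / fact n)"

end

theory Submission
  imports Defs
begin

lemma pmf_nat_summable: "summable (\<lambda>n. pmf (M::nat pmf) n)"
proof (rule bounded_imp_summable[where B=1])
  fix n
  have "(\<Sum>k\<le>n. pmf M k) = measure (measure_pmf M) {..n}"
    by (simp add: measure_measure_pmf_finite)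
  also have "\<dots> \<le> 1" by simp
  finally show "(\<Sum>k\<le>n. pmf M k) \<le> 1" .
qed simp

lemma Gamma_shift:
  fixes z :: real assumes "z > 0"
  shows "Gamma (z + real n) = Gamma z * pochhammer z n"
proof -
  have "z \<notin> \<int>\<^sub>\<le>\<^sub>0" using assms by (auto elim!: nonpos_Ints_cases)
  moreover have "Gamma z > 0" using assms by simp
  ultimately show ?thesis using pochhammer_Gamma[of z n]
    by (simp add: field_simps)
qed

lemma term_eq:
  fixes r q :: real and x k :: nat
  assumes "r > 0"
  shows "nb_binom r (x+k) * q ^ (x+k) / (real (x+k) + 1)
     = q ^ x / (1 + real x) * nb_binom r x *
       (pochhammer 1 k * pochhammer (r + real x) k / pochhammer (2 + real x) k * q ^ k / fact k)"
proof -
  have g1: "Gamma (r + real (x+k)) = Gamma (r + real x) * pochhammer (r + real x) k"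
    using Gamma_shift[of "r + real x" k] assms by (simp add: add.assoc)
  have g2: "Gamma (2 + real x + real k) = Gamma (2 + real x) * pochhammer (2 + real x) k"
    using Gamma_shift[of "2 + real x" k] by simp
  have f1: "Gamma (2 + real x + real k) = fact (Suc (x+k))"
    using Gamma_fact[of "Suc (x+k)"] by (simp add: add_ac)
  have f2: "Gamma (2 + real x) = fact (Suc x)"
    using Gamma_fact[of "Suc x"] by (simp add: add_ac)
  have p2: "pochhammer (2 + real x) k = fact (Suc (x+k)) / fact (Suc x)"
  proof -
    have "fact (Suc x) > (0::real)" by simp
    then show ?thesis using g2 f1 f2 by (simp add: divide_simps del: fact_Suc)
  qed
  have p1: "pochhammer (1::real) k = fact k" by (simp add: pochhammer_fact)
  have pos: "Gamma r > 0" "Gamma (r + real x) > 0" using assms by auto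
  have fx: "fact (Suc x) = (1 + real x) * fact x" by simp
  have fxk: "fact (Suc (x+k)) = (real (x+k) + 1) * fact (x+k)" by simp
  have nz: "fact k \<noteq> (0::real)" "fact x \<noteq> (0::real)" "fact (x+k) \<noteq> (0::real)" "Gamma r \<noteq> 0"
     "1 + real x \<noteq> 0" "real (x+k) + 1 \<noteq> 0" using pos by auto
  show ?thesis
    unfolding nb_binom_def g1 p1 p2 fx fxk power_add
    using nz by (simp add: divide_simps del: of_nat_add fact_Suc)
qed

theorem theorem1:
  fixes r p q :: real and N X :: "nat pmf"
  assumes "r > 0" and "0 < p" and "p < 1" and "q = 1 - p"
    and "\<And>n. pmf N n = nb_binom r n * p powr r * q ^ n"
    and "X = bind_pmf N (\<lambda>n. pmf_of_set {0..n})"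
  shows "\<forall>x::nat. pmf X x =
           q ^ x * p powr r / (1 + real x) * nb_binom r x
             * hyp2F1 1 (r + real x) (2 + real x) q"
proof
  fix x :: nat
  define f where "f n = pmf N n * (if x \<le> n then 1 / (real n + 1) else 0)" for n
  have fnn: "\<And>n. f n \<ge> 0" unfolding f_def by simp
  have fsum: "summable f"
    by (rule summable_comparison_test'[OF pmf_nat_summable[of N], where N=0])
       (auto simp: f_def field_simps)
  have "ennreal (pmf X x) = (\<integral>\<^sup>+n. pmf (pmf_of_set {0..n}) x \<partial>measure_pmf N)"
    unfolding assms(6) by (rule ennreal_pmf_bind)
  also have "\<dots> = (\<Sum>n. ennreal (f n))"
    unfolding nn_integral_measure_pmf nn_integral_count_space_nat
    by (rule suminf_cong) (auto simp: f_def indicator_def ennreal_mult'[symmetric])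
  also have "\<dots> = ennreal (\<Sum>n. f n)" using fnn fsum by (rule suminf_ennreal2)
  finally have X1: "pmf X x = (\<Sum>n. f n)"
    using fnn fsum by (simp add: suminf_nonneg)
  have "(\<Sum>n. f (n + x)) = (\<Sum>n. f n) - (\<Sum>i<x. f i)"
    using fsum by (rule suminf_minus_initial_segment)
  also have "(\<Sum>i<x. f i) = 0" by (simp add: f_def)
  finally have X2: "pmf X x = (\<Sum>n. f (n + x))" using X1 by simp
  define C where "C = q ^ x * p powr r / (1 + real x) * nb_binom r x"
  define g where "g k = pochhammer 1 k * pochhammer (r + real x) k / pochhammer (2 + real x) k * q ^ k / fact k" for k
  have fg: "f (k + x) = C * g k" for k
    using term_eq[OF assms(1), where q=q and x=x and k=k] unfolding f_def C_def g_def assms(5)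
    by (simp add: add.commute mult_ac)
  have Cnz: "C \<noteq> 0"
  proof -
    have "Gamma r \<noteq> 0" "Gamma (r + real x) \<noteq> 0" using assms(1) by (simp_all add: less_imp_neq[symmetric])
    then show ?thesis using assms(1-4) unfolding C_def nb_binom_def by auto
  qed
  have "summable (\<lambda>k. C * g k)"
    using fsum fg summable_iff_shift[of f x] by simp
  then have gs: "summable g" using Cnz by simp
  have "pmf X x = (\<Sum>k. C * g k)" using X2 fg by simp
  also have "\<dots> = C * suminf g" using gs by (rule suminf_mult)
  finally show "pmf X x = q ^ x * p powr r / (1 + real x) * nb_binom r x
             * hyp2F1 1 (r + real x) (2 + real x) q"
    unfolding C_def hyp2F1_def g_def by simp
qed

end
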